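(* The set of finite factors of $\mathbf{t}_{3/2}$ and the set of finite factors of $\mathbf{t}'$ are each closed under reversal: if $u\in\{0,1\}^*$ is a factor of one of these words, then so is its reversal $u^R$.
   Context: Base-$3/2$ expansions: $\langle 0\rangle_{3/2}$ is the empty word, and for $n\ge 1$, writing $2n=3m+d$ with integers $m\ge0$, $d\in\{0,1,2\}$, set $\langle n\rangle_{3/2}=\langle m\rangle_{3/2}\,d$. The Thue--Morse word in base $3/2$ is $\mathbf{t}_{3/2}=(t_n)_{n\ge0}\in\{0,1\}^{\mathbb{N}}$ where $t_n$ is the digit sum of $\langle n\rangle_{3/2}$ modulo $2$; equivalently the unique binary sequence with $t_0=0$, $t_{3n}=t_{3n+1}=t_{2n}$, $t_{3n+2}=1-t_{2n+1}$. Dekking's word $\mathbf{t}'=(x_n)_{n\ge0}$ is the unique binary infinite word with $x_0=0$ such that $\mathbf{t}'=\beta(x_0x_1)\beta(x_2x_3)\cdots$ where $\beta(00)=\beta(01)=010$, $\beta(10)=\beta(11)=101$. The reversal of $a_1\cdots a_n$ is $a_n\cdots a_1$. *)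

theory Defs
  imports Main
begin

function base32 :: "nat \<Rightarrow> nat list" where
  "base32 n = (if n = 0 then [] else base32 ((2 * n) div 3) @ [(2 * n) mod 3])"
  by pat_completeness auto
termination
  by (relation "measure id") auto

declare base32.simps[simp del]

definition tm32 :: "nat \<Rightarrow> nat" where
  "tm32 n = sum_list (base32 n) mod 2"

text \<open>Dekking's morphism on length-2 blocks: beta(00)=beta(01)=010, beta(10)=beta(11)=101.\<close>
definition beta :: "nat \<Rightarrow> nat \<Rightarrow> nat list" where
  "beta a b = (if a = 0 then [0, 1, 0] else [1, 0, 1])"

text \<open>Dekking's word: the unique binary word x with x_0 = 0 and
  x = beta(x_0 x_1) beta(x_2 x_3) ...; position n of the concatenation lies in the
  block number n div 3, at offset n mod 3.\<close>
definition dekking :: "nat \<Rightarrow> nat" where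
  "dekking = (THE x. (\<forall>n. x n \<in> {0, 1}) \<and> x 0 = 0 \<and>
      (\<forall>n. x n = beta (x (2 * (n div 3))) (x (2 * (n div 3) + 1)) ! (n mod 3)))"

definition factor_of :: "nat list \<Rightarrow> (nat \<Rightarrow> nat) \<Rightarrow> bool" where
  "factor_of u w \<longleftrightarrow> (\<exists>i. u = map w [i..<i + length u])"

end

theory Submission
  imports Defs "HOL-Number_Theory.Cong"
begin

definition PP :: "nat \<Rightarrow> nat" where "PP n = (2 * n) div 3"

lemma tm_rec: "tm32 n = (tm32 (PP n) + (2 * n) mod 3) mod 2"
proof (cases "n = 0")
  case True
  then show ?thesis by (simp add: tm32_def PP_def base32.simps)
next
  case False
  then have "base32 n = base32 ((2 * n) div 3) @ [(2 * n) mod 3]"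
    by (simp add: base32.simps)
  then show ?thesis by (simp add: tm32_def PP_def mod_add_left_eq)
qed

lemma tm_lt2: "tm32 n < 2" by (simp add: tm32_def)

lemma par: assumes "(d::nat) < 3" shows "(((a+b+c) mod 2) + (2 - d)) mod 2 = (((a + d) mod 2) + b + c) mod 2"
proof -
  have l: "(((a+b+c) mod 2) + (2 - d)) mod 2 = ((a+b+c) + (2 - d)) mod 2" by (rule mod_add_left_eq)
  have r: "(((a + d) mod 2) + b + c) mod 2 = ((a + d) mod 2 + (b + c)) mod 2" by (simp add: add.assoc)
  also have "\<dots> = ((a + d) + (b + c)) mod 2" by (rule mod_add_left_eq)
  finally have r: "(((a + d) mod 2) + b + c) mod 2 = ((a + b + c) + d) mod 2" by (simp add: ac_simps)
  have "d = 0 \<or> d = 1 \<or> d = 2" using assms by auto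
  then show ?thesis unfolding l r by auto
qed
lemma par2: assumes "(r::nat) < 3" shows "(k + (2 - r)) mod 2 = (k + r) mod 2"
proof -
  have "r = 0 \<or> r = 1 \<or> r = 2" using assms by auto
  then show ?thesis by auto
qed

lemma dm3: "(a::nat) = 3 * m + e \<Longrightarrow> e < 3 \<Longrightarrow> a div 3 = m \<and> a mod 3 = e"
  by simp

lemma mirror:
  "(PP ^^ j) n = x \<Longrightarrow> x + x' + 2 = 2 ^ j * y \<Longrightarrow>
    n + 2 \<le> 3 ^ j * y \<and> (PP ^^ j) (3 ^ j * y - n - 2) = x' \<and>
    tm32 (3 ^ j * y - n - 2) = (tm32 n + tm32 x + tm32 x') mod 2"
proof (induction j arbitrary: n y)
  case 0
  then have nx: "n = x" and yy: "y = x + x' + 2" by auto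
  have ee: "tm32 x + tm32 x + tm32 x' = tm32 x' + tm32 x * 2" by simp
  have "(tm32 x + tm32 x + tm32 x') mod 2 = tm32 x' mod 2" unfolding ee by (rule mod_mult_self1)
  also have "\<dots> = tm32 x'" using tm_lt2[of x'] by simp
  finally show ?case using nx yy by simp
next
  case (Suc j)
  have h1: "(PP ^^ j) (PP n) = x" using Suc.prems(1) by (metis comp_apply funpow_Suc_right)
  have h2: "x + x' + 2 = 2 ^ j * (2 * y)" using Suc.prems(2) by simp
  note IH = Suc.IH[OF h1 h2]
  define A where "A = 3 ^ j * y"
  define d where "d = (2 * n) mod 3"
  have e1: "2 * n = 3 * PP n + d" unfolding d_def PP_def by simp
  have dl: "d < 3" unfolding d_def by simp
  have i1: "PP n + 2 \<le> 2 * A" using IH unfolding A_def by (simp add: mult.left_commute)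
  have A3: "3 ^ Suc j * y = 3 * A" unfolding A_def by simp
  have A2: "3 ^ j * (2 * y) = 2 * A" unfolding A_def by simp
  have b1: "n + 2 \<le> 3 * A" using e1 dl i1 by linarith
  define n' where "n' = 3 * A - n - 2"
  define m' where "m' = 2 * A - PP n - 2"
  have e2: "2 * n' = 3 * m' + (2 - d)" unfolding n'_def m'_def using e1 dl i1 b1 by linarith
  have pn: "PP n' = m'" unfolding PP_def using dm3[OF e2] dl by simp
  have dn: "(2 * n') mod 3 = 2 - d" using dm3[OF e2] dl by simp
  have t1: "tm32 n' = (tm32 m' + (2 - d)) mod 2" using tm_rec[of n'] pn dn by simp
  have t2: "tm32 n = (tm32 (PP n) + d) mod 2" using tm_rec[of n] d_def by simp
  have t3: "tm32 m' = (tm32 (PP n) + tm32 x + tm32 x') mod 2"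
    using IH unfolding m'_def A2 by simp
  have t4: "tm32 n' = (tm32 n + tm32 x + tm32 x') mod 2"
    unfolding t1 t2 t3 using par[OF dl] by simp
  have "(PP ^^ j) m' = x'" using IH unfolding m'_def A2 by simp
  then have t5: "(PP ^^ Suc j) n' = x'" using pn by (metis comp_apply funpow_Suc_right)
  show ?case unfolding A3 n'_def[symmetric] using b1 t4 t5 by blast
qed

lemma PP_less: "0 < n \<Longrightarrow> PP n < n" unfolding PP_def by simp

lemma PP_zero: "\<exists>j. (PP ^^ j) m = 0"
proof (induction m rule: less_induct)
  case (less m)
  show ?case
  proof (cases "m = 0")
    case True then show ?thesis by (intro exI[of _ 0]) simp
  next
    case False
    then obtain j where "(PP ^^ j) (PP m) = 0" using less PP_less by blast
    then show ?thesis by (metis comp_apply funpow_Suc_right)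
  qed
qed

lemma PP_mono: "n \<le> m \<Longrightarrow> (PP ^^ j) n \<le> (PP ^^ j) m"
  by (induction j) (auto simp: PP_def div_le_mono)

lemma PP_zero_add: "(PP ^^ j) m = 0 \<Longrightarrow> (PP ^^ (j + k)) m = 0"
  by (induction k) (auto simp: PP_def)

lemma tm2: "tm32 2 = 1"
proof -
  have "tm32 0 = 0" by (simp add: tm32_def base32.simps)
  then have "tm32 1 = 0" using tm_rec[of 1] by (simp add: PP_def)
  then show ?thesis using tm_rec[of 2] by (simp add: PP_def)
qed

lemma PP2: "2 \<le> j \<Longrightarrow> (PP ^^ j) 2 = 0"
proof -
  assume "2 \<le> j"
  then obtain k where k: "j = 2 + k" using le_Suc_ex by blast
  have h: "(PP ^^ 2) 2 = 0" by (simp add: PP_def numeral_2_eq_2)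
  show ?thesis using PP_zero_add[OF h, of k] k by simp
qed

lemma Dprime2:
  assumes j: "2 \<le> j"
  shows "\<exists>y\<ge>1. tm32 (2 ^ j * y - 2) = 0"
proof (rule ccontr)
  assume H: "\<not> ?thesis"
  have H1: "tm32 (2 ^ j * y - 2) = 1" if "y \<ge> 1" for y
    using H that tm_lt2[of "2 ^ j * y - 2"] by force
  have cop: "coprime ((3::nat) ^ j) (2 ^ j)" by simp
  obtain z where z: "[3 ^ j * z = Suc 0] (mod 2 ^ j)"
    using cong_solve_coprime_nat[OF cop] by blast
  define y where "y = 2 * z + 2 ^ j"
  have y1: "y \<ge> 1" unfolding y_def by (simp add: Suc_le_eq)
  have cy: "[3 ^ j * y = 2] (mod 2 ^ j)"
  proof -
    have "[3 ^ j * y = 3 ^ j * (2 * z)] (mod 2 ^ j)"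
      unfolding y_def by (simp add: algebra_simps cong_def)
    also have "[3 ^ j * (2 * z) = 2 * Suc 0] (mod 2 ^ j)"
      using cong_mult[OF cong_refl[of 2] z] by (simp add: algebra_simps)
    finally show ?thesis by simp
  qed
  have p4: "(4::nat) \<le> 2 ^ j" using j power_increasing[of 2 j "2::nat"] by simp
  have p2: "(2::nat) ^ j + 2 \<le> 3 ^ j"
  proof -
    obtain k where k: "j = 2 + k" using j le_Suc_ex by blast
    have a: "(2::nat) ^ k \<le> 3 ^ k" by (simp add: power_mono)
    have b: "(1::nat) \<le> 3 ^ k" by simp
    have "(2::nat) ^ (2 + k) = 4 * 2 ^ k" "(3::nat) ^ (2 + k) = 9 * 3 ^ k" by (simp_all add: power_add)
    then show ?thesis unfolding k using a b by linarith
  qed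
  have "(3::nat) ^ j \<le> 3 ^ j * y" using y1 by simp
  then have big: "3 ^ j * y \<ge> 2 ^ j + 2" using p2 by linarith
  have "2 ^ j dvd (3 ^ j * y - 2)"
    using cy big by (subst cong_altdef_nat[symmetric]) auto
  then obtain w where w: "3 ^ j * y - 2 = 2 ^ j * w" by blast
  have "(1::nat) \<le> 2 ^ j" by simp
  then have "3 ^ j * y - 2 > 0" using big by linarith
  then have w1: "w \<ge> 1" using w by (cases w) auto
  have "(2::nat) ^ j \<le> 2 ^ j * y" using y1 by simp
  then have prem: "0 + (2 ^ j * y - 2) + 2 = 2 ^ j * y" using p4 by linarith
  have m: "tm32 (3 ^ j * y - 2 - 2) = (tm32 2 + tm32 0 + tm32 (2 ^ j * y - 2)) mod 2"
    using mirror[OF PP2[OF j] prem] by blast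
  have "tm32 0 = 0" by (simp add: tm32_def base32.simps)
  then have "tm32 (2 ^ j * w - 2) = 0" using m tm2 H1[OF y1] w by simp
  then show False using H1[OF w1] by simp
qed

lemma Dprime: "\<exists>y\<ge>1. 2 \<le> 2 ^ j * y \<and> tm32 (2 ^ j * y - 2) = 0"
proof -
  obtain y where y: "y \<ge> 1" "tm32 (2 ^ (j + 2) * y - 2) = 0" using Dprime2[of "j + 2"] by auto
  have "2 ^ (j + 2) * y = 2 ^ j * (4 * y)" by (simp add: power_add)
  moreover have "2 \<le> 2 ^ j * (4 * y)" using y(1) mult_le_mono[of 1 "2 ^ j" 4 "4 * y"] by simp
  ultimately have "tm32 (2 ^ j * (4 * y) - 2) = 0" "2 \<le> 2 ^ j * (4 * y)" "4 * y \<ge> 1"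
    using y by (metis, simp, simp)
  then show ?thesis by blast
qed

lemma tm_core: "\<exists>c. \<forall>n\<le>M. n \<le> c \<and> tm32 (c - n) = tm32 n"
proof -
  obtain j where j: "(PP ^^ j) M = 0" using PP_zero by blast
  obtain y where y: "y \<ge> 1" "2 \<le> 2 ^ j * y" "tm32 (2 ^ j * y - 2) = 0" using Dprime[of j] by blast
  have t0: "tm32 0 = 0" by (simp add: tm32_def base32.simps)
  show ?thesis
  proof (intro exI[of _ "3 ^ j * y - 2"] allI impI)
    fix n assume "n \<le> M"
    then have "(PP ^^ j) n = 0" using PP_mono[of n M j] j by simp
    from mirror[OF this, of "2 ^ j * y - 2" y] y
    have "n + 2 \<le> 3 ^ j * y" "tm32 (3 ^ j * y - n - 2) = tm32 n"
      using t0 tm_lt2[of n] by auto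
    then show "n \<le> 3 ^ j * y - 2 \<and> tm32 (3 ^ j * y - 2 - n) = tm32 n" by simp
  qed
qed

lemma refl_factor:
  assumes "\<And>M. \<exists>c. \<forall>n\<le>M. n \<le> c \<and> w (c - n) = w n"
    and "factor_of u w"
  shows "factor_of (rev u) w"
proof -
  obtain i where u: "u = map w [i..<i + length u]" using assms(2) factor_of_def by blast
  define L where "L = length u"
  show ?thesis
  proof (cases "L = 0")
    case True then show ?thesis unfolding factor_of_def L_def by simp
  next
    case False
    obtain c where c: "\<forall>n\<le>i + L. n \<le> c \<and> w (c - n) = w n" using assms(1) by blast
    have "rev u = map w [c - (i + L - 1)..<c - (i + L - 1) + length (rev u)]"
    proof (rule nth_equalityI)
      show "length (rev u) = length (map w [c - (i + L - 1)..<c - (i + L - 1) + length (rev u)])"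
        by simp
    next
      fix k assume k: "k < length (rev u)"
      then have kL: "k < L" unfolding L_def by simp
      have "rev u ! k = u ! (L - Suc k)" using k by (simp add: rev_nth L_def)
      also have "\<dots> = map w [i..<i + L] ! (L - Suc k)" using u unfolding L_def by simp
      also have "\<dots> = w (i + (L - Suc k))" using kL by simp
      also have "\<dots> = w (c - (i + (L - Suc k)))" using c[rule_format, of "i + (L - Suc k)"] kL by simp
      also have "c - (i + (L - Suc k)) = c - (i + L - 1) + k"
        using c[rule_format, of "i + L - 1"] kL False by arith
      finally show "rev u ! k = map w [c - (i + L - 1)..<c - (i + L - 1) + length (rev u)] ! k"
        using k by simp
    qed
    then show ?thesis unfolding factor_of_def by blast
  qed
qed

definition XX :: "nat \<Rightarrow> nat" where "XX n = (tm32 (n div 3) + n mod 3) mod 2"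

lemma XX_even: "XX (2 * k) = tm32 k"
  unfolding XX_def using tm_rec[of k] by (simp add: PP_def)

lemma XX_prop: "(\<forall>n. XX n \<in> {0, 1}) \<and> XX 0 = 0 \<and>
      (\<forall>n. XX n = beta (XX (2 * (n div 3))) (XX (2 * (n div 3) + 1)) ! (n mod 3))"
  proof (intro conjI allI)
    fix n show "XX n \<in> {0, 1}" unfolding XX_def by auto
  next
    show "XX 0 = 0" unfolding XX_def by (simp add: tm32_def base32.simps)
  next
    fix n
    have r: "(n::nat) mod 3 = 0 \<or> n mod 3 = 1 \<or> n mod 3 = 2" by auto
    have t: "tm32 (n div 3) = 0 \<or> tm32 (n div 3) = 1" using tm_lt2[of "n div 3"] by auto
    show "XX n = beta (XX (2 * (n div 3))) (XX (2 * (n div 3) + 1)) ! (n mod 3)"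
      unfolding XX_even beta_def XX_def[of n] using r t by (elim disjE) simp_all
  qed

lemma dekking_eq: "dekking = XX"
  unfolding dekking_def
proof (rule the_equality)
  show "(\<forall>n. XX n \<in> {0, 1}) \<and> XX 0 = 0 \<and>
      (\<forall>n. XX n = beta (XX (2 * (n div 3))) (XX (2 * (n div 3) + 1)) ! (n mod 3))"
    by (rule XX_prop)
next
  fix x
  assume H: "(\<forall>n. x n \<in> {0, 1}) \<and> x 0 = 0 \<and>
      (\<forall>n. x n = beta (x (2 * (n div 3))) (x (2 * (n div 3) + 1)) ! (n mod 3))"
  have XXr: "\<forall>n. XX n = beta (XX (2 * (n div 3))) (XX (2 * (n div 3) + 1)) ! (n mod 3)"
    using XX_prop by blast
  show "x = XX"
  proof
    fix n show "x n = XX n"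
    proof (induction n rule: less_induct)
      case (less n)
      show ?case
      proof (cases "n = 0")
        have x0: "x 0 = 0" using H by blast
        have X0: "XX 0 = 0" using XX_prop by blast
        case True then show ?thesis using x0 X0 by simp
      next
        case False
        then have "2 * (n div 3) < n" by linarith
        then have e: "x (2 * (n div 3)) = XX (2 * (n div 3))" using less by blast
        have bb: "\<And>a b c. beta a b = beta a c" by (simp add: beta_def)
        have "x n = beta (x (2 * (n div 3))) (x (2 * (n div 3) + 1)) ! (n mod 3)" using H by blast
        also have "\<dots> = beta (XX (2 * (n div 3))) (x (2 * (n div 3) + 1)) ! (n mod 3)" unfolding e ..
        also have "\<dots> = beta (XX (2 * (n div 3))) (XX (2 * (n div 3) + 1)) ! (n mod 3)"
          by (simp add: beta_def)
        also have "\<dots> = XX n" by (rule XXr[rule_format, symmetric])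
        finally show ?thesis .
      qed
    qed
  qed
qed

lemma XX_core: "\<exists>c. \<forall>n\<le>M. n \<le> c \<and> XX (c - n) = XX n"
proof -
  obtain c0 where c0: "\<forall>k\<le>M div 3. k \<le> c0 \<and> tm32 (c0 - k) = tm32 k" using tm_core by blast
  show ?thesis
  proof (intro exI[of _ "3 * c0 + 2"] allI impI)
    fix n assume n: "n \<le> M"
    define k where "k = n div 3"
    define r where "r = n mod 3"
    have kM: "k \<le> M div 3" unfolding k_def using n by (simp add: div_le_mono)
    have kc: "k \<le> c0" and tk: "tm32 (c0 - k) = tm32 k" using c0 kM by auto
    have nk: "n = 3 * k + r" "r < 3" unfolding k_def r_def by auto
    have ee: "3 * c0 + 2 - n = 3 * (c0 - k) + (2 - r)" using nk kc by linarith
    have "2 - r < 3" by simp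
    note dd = dm3[OF ee this]
    have d1: "(3 * c0 + 2 - n) div 3 = c0 - k" using dd by blast
    have d2: "(3 * c0 + 2 - n) mod 3 = 2 - r" using dd by blast
    have "XX (3 * c0 + 2 - n) = (tm32 k + (2 - r)) mod 2" unfolding XX_def d1 d2 tk ..
    also have "\<dots> = XX n" unfolding XX_def k_def[symmetric] r_def[symmetric]
      using par2[OF nk(2)] by simp
    finally show "n \<le> 3 * c0 + 2 \<and> XX (3 * c0 + 2 - n) = XX n" using nk kc by simp
  qed
qed

theorem proposition17:
  shows "(\<forall>u. factor_of u tm32 \<longrightarrow> factor_of (rev u) tm32) \<and>
         (\<forall>u. factor_of u dekking \<longrightarrow> factor_of (rev u) dekking)"
  using refl_factor[OF tm_core] refl_factor[OF XX_core] unfolding dekking_eq by blast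

end
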